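(* Let $(\Omega,\mathcal A)$ be a measurable space and let $K$ be a random compact set in $\mathbb C^n$. If $K$ takes countably many values, or if $\left|\bigcup_{\omega\in\Omega}K(\omega)\setminus\overline{\operatorname{int}K(\omega)}\right|\le\aleph_0$, then $K$ is uniformly separable. Moreover, if $K(\omega)$ is the closure of a bounded open subset of $\mathbb C^n$ for all $\omega\in\Omega$, then $K$ is uniformly separable.
   Context: A random compact set is a measurable map from $\Omega$ to the space of non-empty compact subsets of $\mathbb C^n$ with the Hausdorff distance and its Borel $\sigma$-algebra. A random compact set $K$ is uniformly separable if there is a countable set $E\subset\mathbb C^n$ such that $E\cap K(\omega)$ is dense in $K(\omega)$ for every $\omega\in\Omega$. *)

theory Defs
  imports "HOL-Analysis.Analysis"
begin

definition hausdorff_dist :: "'a::metric_space set \<Rightarrow> 'a set \<Rightarrow> real" where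
  "hausdorff_dist A B = max (SUP x\<in>A. infdist x B) (SUP y\<in>B. infdist y A)"

definition compact_sets :: "'a::metric_space set set" where
  "compact_sets = {K. compact K \<and> K \<noteq> {}}"

definition hausdorff_topology :: "'a::metric_space set topology" where
  "hausdorff_topology = Metric_space.mtopology compact_sets hausdorff_dist"

definition hausdorff_borel :: "'a::metric_space set measure" where
  "hausdorff_borel = sigma compact_sets {U. openin hausdorff_topology U}"

definition random_compact_set :: "'w measure \<Rightarrow> ('w \<Rightarrow> 'a::metric_space set) \<Rightarrow> bool" where
  "random_compact_set M K \<longleftrightarrow> K \<in> measurable M hausdorff_borel"

definition uniformly_separable :: "'w measure \<Rightarrow> ('w \<Rightarrow> 'a::metric_space set) \<Rightarrow> bool" where
  "uniformly_separable M K \<longleftrightarrow>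
     (\<exists>E. countable E \<and> (\<forall>\<omega>\<in>space M. K \<omega> \<subseteq> closure (E \<inter> K \<omega>)))"

end

theory Submission
  imports Defs
begin

lemma sep_subset:
  fixes S :: "'a::second_countable_topology set"
  obtains D where "countable D" "D \<subseteq> S" "S \<subseteq> closure D"
proof -
  obtain B :: "'a set set" where B: "countable B" "\<And>C. C \<in> B \<Longrightarrow> open C"
    "\<And>T. open T \<Longrightarrow> \<exists>U. U \<subseteq> B \<and> T = \<Union>U"
    using univ_second_countable by blast
  define f where "f = (\<lambda>b. SOME x. x \<in> b \<inter> S)"
  define D where "D = f ` {b\<in>B. b \<inter> S \<noteq> {}}"
  have fin: "f b \<in> b \<inter> S" if "b \<inter> S \<noteq> {}" for b
    unfolding f_def using that by (metis (no_types, lifting) ex_in_conv someI)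
  have "countable D" unfolding D_def using B(1) by simp
  moreover have "D \<subseteq> S" unfolding D_def using fin by auto
  moreover have "S \<subseteq> closure D"
  proof
    fix x assume x: "x \<in> S"
    show "x \<in> closure D"
      unfolding closure_iff_nhds_not_empty
    proof (intro allI impI)
      fix A T assume T: "T \<subseteq> A" "open T" "x \<in> T"
      obtain U where U: "U \<subseteq> B" "T = \<Union>U" using B(3)[OF T(2)] by blast
      then obtain b where b: "b \<in> U" "x \<in> b" using T(3) by blast
      have "b \<inter> S \<noteq> {}" using b x by blast
      hence "f b \<in> D" "f b \<in> b" using b U fin unfolding D_def by auto
      thus "D \<inter> A \<noteq> {}" using b U T by blast
    qed
  qed
  ultimately show ?thesis by (rule that)
qed

lemma part2:
  fixes K :: "'w \<Rightarrow> ('a::{metric_space,second_countable_topology}) set"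
  assumes "countable (\<Union>\<omega>\<in>space M. K \<omega> - closure (interior (K \<omega>)))"
  shows "uniformly_separable M K"
proof -
  let ?C = "\<Union>\<omega>\<in>space M. K \<omega> - closure (interior (K \<omega>))"
  obtain D :: "'a set" where D: "countable D" "D \<subseteq> UNIV" "UNIV \<subseteq> closure D"
    by (rule sep_subset)
  have "\<forall>\<omega>\<in>space M. K \<omega> \<subseteq> closure ((D \<union> ?C) \<inter> K \<omega>)"
  proof (intro ballI subsetI)
    fix \<omega> x assume w: "\<omega> \<in> space M" and x: "x \<in> K \<omega>"
    show "x \<in> closure ((D \<union> ?C) \<inter> K \<omega>)"
    proof (cases "x \<in> closure (interior (K \<omega>))")
      case True
      have "interior (K \<omega>) \<subseteq> closure D" using D(3) by (rule subset_trans[OF subset_UNIV])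
      hence "closure (interior (K \<omega>)) = closure (interior (K \<omega>) \<inter> D)"
        using closure_open_Int_superset[of "interior (K \<omega>)" D] by simp
      moreover have "interior (K \<omega>) \<inter> D \<subseteq> (D \<union> ?C) \<inter> K \<omega>"
      proof -
        have "interior (K \<omega>) \<inter> D \<subseteq> D \<inter> K \<omega>" using interior_subset[of "K \<omega>"] by auto
        also have "\<dots> \<subseteq> (D \<union> ?C) \<inter> K \<omega>" by (intro Int_mono Un_upper1 order_refl)
        finally show ?thesis .
      qed
      moreover have "closure (interior (K \<omega>) \<inter> D) \<subseteq> closure ((D \<union> ?C) \<inter> K \<omega>)"
        using calculation(2) by (rule closure_mono)
      ultimately have "closure (interior (K \<omega>)) \<subseteq> closure ((D \<union> ?C) \<inter> K \<omega>)"
        by simp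
      thus ?thesis using True by (rule subsetD)
    next
      case False
      hence "x \<in> ?C" using w x by (intro UN_I[OF w]) simp
      hence "x \<in> (D \<union> ?C) \<inter> K \<omega>" using x by simp
      thus ?thesis by (rule subsetD[OF closure_subset])
    qed
  qed
  moreover have "countable (D \<union> ?C)" using D(1) assms by (rule countable_Un)
  ultimately show ?thesis unfolding uniformly_separable_def by blast
qed

theorem proposition7p2:
  fixes M :: "'w measure" and K :: "'w \<Rightarrow> (complex ^ 'n) set"
  assumes "random_compact_set M K"
  shows "(countable (K ` space M) \<longrightarrow> uniformly_separable M K)
       \<and> (countable (\<Union>\<omega>\<in>space M. K \<omega> - closure (interior (K \<omega>))) \<longrightarrow> uniformly_separable M K)
       \<and> ((\<forall>\<omega>\<in>space M. \<exists>U. open U \<and> bounded U \<and> K \<omega> = closure U) \<longrightarrow> uniformly_separable M K)"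
proof (intro conjI impI)
  assume c: "countable (K ` space M)"
  define g where "g S = (SOME D. countable D \<and> D \<subseteq> S \<and> S \<subseteq> closure D)"
    for S :: "(complex ^ 'n) set"
  have g: "countable (g S) \<and> g S \<subseteq> S \<and> S \<subseteq> closure (g S)" for S
  proof -
    obtain D where "countable D" "D \<subseteq> S" "S \<subseteq> closure D" by (rule sep_subset)
    hence "\<exists>D. countable D \<and> D \<subseteq> S \<and> S \<subseteq> closure D" by blast
    thus ?thesis unfolding g_def by (rule someI_ex)
  qed
  have "countable (\<Union>S\<in>K ` space M. g S)" using c g by (intro countable_UN) auto
  moreover have "\<forall>\<omega>\<in>space M. K \<omega> \<subseteq> closure ((\<Union>S\<in>K ` space M. g S) \<inter> K \<omega>)"
  proof
    fix \<omega> assume w: "\<omega> \<in> space M"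
    have "g (K \<omega>) \<subseteq> (\<Union>S\<in>K ` space M. g S) \<inter> K \<omega>" using w g by blast
    hence "closure (g (K \<omega>)) \<subseteq> closure ((\<Union>S\<in>K ` space M. g S) \<inter> K \<omega>)"
      by (rule closure_mono)
    thus "K \<omega> \<subseteq> closure ((\<Union>S\<in>K ` space M. g S) \<inter> K \<omega>)"
      using g by (meson subset_trans)
  qed
  ultimately show "uniformly_separable M K" unfolding uniformly_separable_def by blast
next
  assume "countable (\<Union>\<omega>\<in>space M. K \<omega> - closure (interior (K \<omega>)))"
  thus "uniformly_separable M K" by (rule part2)
next
  assume h: "\<forall>\<omega>\<in>space M. \<exists>U. open U \<and> bounded U \<and> K \<omega> = closure U"
  have "K \<omega> - closure (interior (K \<omega>)) = {}" if "\<omega> \<in> space M" for \<omega>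
  proof -
    have "\<exists>U. open U \<and> bounded U \<and> K \<omega> = closure U" using h that by (rule bspec)
    then obtain U where U: "open U" "K \<omega> = closure U" by auto
    have "U \<subseteq> interior (K \<omega>)" using U interior_maximal closure_subset by metis
    hence "closure U \<subseteq> closure (interior (K \<omega>))" by (rule closure_mono)
    thus ?thesis using U by auto
  qed
  hence "(\<Union>\<omega>\<in>space M. K \<omega> - closure (interior (K \<omega>))) = {}" by blast
  hence "countable (\<Union>\<omega>\<in>space M. K \<omega> - closure (interior (K \<omega>)))"
    by (simp only: countable_empty)
  thus "uniformly_separable M K" by (rule part2)
qed

end
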